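(* Consider the scalar $N$-player linear-quadratic differential game and the matrix $\mathbf M$ described in the context. Let $\mu=(\mu_1,\dots,\mu_N)$ be a weight vector with $\mu_i>0$ and $\sum_i\mu_i=1$, and set $\mu^s_{\max}=\max_i\mu_i/s_i$. Then every feedback Nash equilibrium $(k_1,\dots,k_N)$ satisfies $$\sum_{i=1}^N\mu_ik_i\le\mu^s_{\max}\big(\varrho(\mathbf M)+a\big).$$ Hence the feedback price of anarchy satisfies $$\rho^{FB}_\mu\le\frac{\mu^s_{\max}\big(\varrho(\mathbf M)+a\big)}{\hat k_\mu},$$ where $\varrho(\mathbf M)$ denotes the spectral radius of $\mathbf M$. In particular, for the weights $\bar\mu_i=s_i/\sum_{j=1}^Ns_j$, $$\rho^{FB}_{\bar\mu}\le\frac{\varrho(\mathbf M)+a}{\big(\sum_{i=1}^Ns_i\big)\,\hat k_{\bar\mu}}.$$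
   Context: **Game.** The game is the infinite-horizon scalar linear-quadratic differential game with players $i\in\{1,\dots,N\}$. - State dynamics: $\dot x(t)=ax(t)+\sum_{i=1}^N b_iu_i(t)$, with $x(0)=x_0\neq0$. - Cost of player $i$: $L_i(u)=\int_0^\infty\big(q_ix(t)^2+r_iu_i(t)^2\big)\,dt$. - Parameters: $a\in\mathbb R$; $q_i>0$, $r_i>0$, $b_i\neq0$ are real scalars. - Notation: $s_i=b_i^2/r_i$ and $\sigma_i=s_iq_i$. **Feedback Nash equilibrium (standard characterization).** A feedback Nash equilibrium is an $N$-tuple of stationary linear policies $u_i=-\frac{b_i}{r_i}k_ix$ such that $(k_1,\dots,k_N)$ solves $$2\big(a-\sum_j s_jk_j\big)k_i+q_i+s_ik_i^2=0\quad\text{for all } i,$$ with $a-\sum_js_jk_j<0$. Player $i$'s cost is $k_ix_0^2$. **Social optimum.** For weights $\mu$, define $$\bar q_\mu=\sum_i\mu_iq_i,\qquad \bar b_\mu=\sum_i\frac{b_i^2}{\mu_ir_i},\qquad \hat k_\mu=\frac{a+\sqrt{a^2+\bar q_\mu\bar b_\mu}}{\bar b_\mu}.$$ The minimum over all controls of $\sum_i\mu_iL_i$ equals $\hat k_\mu x_0^2$. **Feedback price of anarchy.** It is defined as $$\rho^{FB}_\mu=\max\Big\{\sum_i\mu_ik_i/\hat k_\mu\Big\},$$ where the maximum (or supremum) is taken over all feedback Nash equilibria. **Matrix $\mathbf M$.** The matrix $\widetilde{\mathbf M}$ is a $2^N\times2^N$ real matrix whose rows and columns are indexed by subsets $\Omega\subseteq\{1,\dots,N\}$.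 Write $n_\Omega=|\Omega|$. - Row $\Omega=\emptyset$: entry $1$ in each column $\{j\}$ for $j=1,\dots,N$; entry $-a$ in column $\emptyset$; all other entries $0$. - Row $\Omega\neq\emptyset$: entry $\sigma_i/(2n_\Omega-1)$ in column $\Omega\setminus\{i\}$ for each $i\in\Omega$; entry $-1/(2n_\Omega-1)$ in column $\Omega\cup\{i\}$ for each $i\notin\Omega$; entry $a/(2n_\Omega-1)$ in column $\Omega$; all other entries $0$. Let $\mathbf D$ be the diagonal matrix with $\Omega$-th diagonal entry $\prod_{j\in\Omega}s_j$ (the empty product is $1$). Then $\mathbf M=\mathbf D^{-1}\widetilde{\mathbf M}\mathbf D$. *)

theory Defs
  imports "HOL-Analysis.Analysis"
begin

text \<open>Players are the elements of a finite type 'n (so N = CARD('n)).\<close>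

definition s_coef :: "('n \<Rightarrow> real) \<Rightarrow> ('n \<Rightarrow> real) \<Rightarrow> 'n \<Rightarrow> real" where
  "s_coef r b i = (b i)^2 / r i"

definition sigma_coef :: "('n \<Rightarrow> real) \<Rightarrow> ('n \<Rightarrow> real) \<Rightarrow> ('n \<Rightarrow> real) \<Rightarrow> 'n \<Rightarrow> real" where
  "sigma_coef q r b i = s_coef r b i * q i"

text \<open>Feedback Nash equilibrium (standard characterization via the coupled Riccati equations).\<close>
definition is_FNE :: "real \<Rightarrow> ('n::finite \<Rightarrow> real) \<Rightarrow> ('n \<Rightarrow> real) \<Rightarrow> ('n \<Rightarrow> real) \<Rightarrow> ('n \<Rightarrow> real) \<Rightarrow> bool" where
  "is_FNE a q r b k \<longleftrightarrow>
     (\<forall>i. 2 * (a - (\<Sum>j\<in>UNIV. s_coef r b j * k j)) * k i + q i + s_coef r b i * (k i)^2 = 0)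
     \<and> a - (\<Sum>j\<in>UNIV. s_coef r b j * k j) < 0"

definition k_hat :: "real \<Rightarrow> ('n::finite \<Rightarrow> real) \<Rightarrow> ('n \<Rightarrow> real) \<Rightarrow> ('n \<Rightarrow> real) \<Rightarrow> ('n \<Rightarrow> real) \<Rightarrow> real" where
  "k_hat a q r b \<mu> =
     (let qb = (\<Sum>i\<in>UNIV. \<mu> i * q i);
          bb = (\<Sum>i\<in>UNIV. (b i)^2 / (\<mu> i * r i))
      in (a + sqrt (a^2 + qb * bb)) / bb)"

definition PoA_FB :: "real \<Rightarrow> ('n::finite \<Rightarrow> real) \<Rightarrow> ('n \<Rightarrow> real) \<Rightarrow> ('n \<Rightarrow> real) \<Rightarrow> ('n \<Rightarrow> real) \<Rightarrow> real" where
  "PoA_FB a q r b \<mu> =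
     Sup {(\<Sum>i\<in>UNIV. \<mu> i * k i) / k_hat a q r b \<mu> | k. is_FNE a q r b k}"

definition M_tilde :: "real \<Rightarrow> ('n::finite \<Rightarrow> real) \<Rightarrow> ('n \<Rightarrow> real) \<Rightarrow> ('n \<Rightarrow> real) \<Rightarrow> real ^ ('n set) ^ ('n set)" where
  "M_tilde a q r b = (\<chi> \<Omega> \<Theta>.
     if \<Omega> = {} then
       (\<Sum>j\<in>UNIV. if \<Theta> = {j} then 1 else 0) + (if \<Theta> = {} then - a else 0)
     else
       ((\<Sum>i\<in>\<Omega>. if \<Theta> = \<Omega> - {i} then sigma_coef q r b i else 0)
        + (\<Sum>i\<in>UNIV - \<Omega>. if \<Theta> = insert i \<Omega> then -1 else 0)
        + (if \<Theta> = \<Omega> then a else 0)) / (2 * real (card \<Omega>) - 1))"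

definition D_mat :: "('n::finite \<Rightarrow> real) \<Rightarrow> ('n \<Rightarrow> real) \<Rightarrow> real ^ ('n set) ^ ('n set)" where
  "D_mat r b = (\<chi> \<Omega> \<Theta>. if \<Omega> = \<Theta> then (\<Prod>j\<in>\<Omega>. s_coef r b j) else 0)"

definition M_mat :: "real \<Rightarrow> ('n::finite \<Rightarrow> real) \<Rightarrow> ('n \<Rightarrow> real) \<Rightarrow> ('n \<Rightarrow> real) \<Rightarrow> real ^ ('n set) ^ ('n set)" where
  "M_mat a q r b = matrix_inv (D_mat r b) ** M_tilde a q r b ** D_mat r b"

definition spec_rad :: "real ^ 'm ^ 'm \<Rightarrow> real" where
  "spec_rad A = Max {cmod c | c. \<exists>v :: complex ^ 'm. v \<noteq> 0 \<and>
                       (\<chi> i j. complex_of_real (A $ i $ j)) *v v = (\<chi> i. c * v $ i)}"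

end

theory Submission imports Defs "HOL-Computational_Algebra.Polynomial" begin

lemma eig_bound:
  fixes B :: "complex^'m^'m"
  assumes "v \<noteq> 0" "B *v v = c *s v"
  shows "cmod c \<le> (\<Sum>i\<in>UNIV. \<Sum>j\<in>UNIV. cmod (B$i$j))"
proof -
  define m where "m = Max (range (\<lambda>i. cmod (v$i)))"
  have "m \<in> range (\<lambda>i. cmod (v$i))" unfolding m_def by (rule Max_in) auto
  then obtain i0 where i0: "cmod (v$i0) = m" by auto
  have le: "cmod (v$j) \<le> m" for j unfolding m_def by (rule Max_ge) auto
  obtain j where "v$j \<noteq> 0" using assms(1) by (metis vec_eq_iff zero_index)
  hence "cmod (v$j) > 0" by simp
  hence mpos: "m > 0" using le[of j] by linarith
  have ce: "c * v$i0 = (\<Sum>j\<in>UNIV. B$i0$j * v$j)"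
    using arg_cong[OF assms(2), of "\<lambda>x. x$i0"] by (simp add: matrix_vector_mult_def)
  have "cmod c * m = cmod (c * v$i0)" using i0 by (simp add: norm_mult)
  also have "\<dots> = cmod (\<Sum>j\<in>UNIV. B$i0$j * v$j)" using ce by (rule arg_cong)
  also have "\<dots> \<le> (\<Sum>j\<in>UNIV. cmod (B$i0$j) * cmod (v$j))"
    using norm_sum[of "\<lambda>j. B$i0$j * v$j" UNIV] by (simp add: norm_mult)
  also have "\<dots> \<le> (\<Sum>j\<in>UNIV. cmod (B$i0$j) * m)"
    by (intro sum_mono mult_left_mono le) auto
  also have "\<dots> = (\<Sum>j\<in>UNIV. cmod (B$i0$j)) * m" by (simp add: sum_distrib_right)
  also have "\<dots> \<le> (\<Sum>i\<in>UNIV. \<Sum>j\<in>UNIV. cmod (B$i$j)) * m"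
    using mpos by (intro mult_right_mono member_le_sum) (auto intro: sum_nonneg)
  finally show ?thesis using mpos by simp
qed

lemma eig_finite:
  fixes B :: "complex^'m^'m"
  shows "finite {c. \<exists>v. v \<noteq> 0 \<and> B *v v = c *s v}"
proof -
  define Cm where "Cm c = (\<chi> i j. B$i$j - (if i = j then c else 0))" for c
  define p where "p = (\<Sum>\<sigma>\<in>{\<sigma>. \<sigma> permutes (UNIV::'m set)}. of_int (sign \<sigma>) *
        (\<Prod>i\<in>UNIV. [: B$i$\<sigma> i, - (if \<sigma> i = i then 1 else 0) :]))"
  have pe: "poly p c = det (Cm c)" for c
    unfolding p_def det_def Cm_def poly_sum poly_prod
    by (intro sum.cong refl arg_cong2[where f="(*)"]) (simp add: poly_prod, intro prod.cong, auto)
  have ker: "Cm c *v v = 0 \<longleftrightarrow> B *v v = c *s v" for c v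
  proof -
    have "(\<Sum>j\<in>UNIV. (B $ i $ j - (if i = j then c else 0)) * v $ j)
        = (\<Sum>j\<in>UNIV. B $ i $ j * v $ j) - c * v $ i" for i
      by (simp add: algebra_simps sum_subtractf if_distrib[of "\<lambda>x. _ * x"] cong: if_cong)
    thus ?thesis by (simp add: Cm_def vec_eq_iff matrix_vector_mult_def)
  qed
  have det0: "det (Cm c) = 0 \<longleftrightarrow> (\<exists>v. v \<noteq> 0 \<and> B *v v = c *s v)" for c
  proof -
    have "det (Cm c) = 0 \<longleftrightarrow> \<not> invertible (Cm c)" using invertible_det_nz[of "Cm c"] by simp
    also have "\<dots> \<longleftrightarrow> \<not> (\<forall>x. Cm c *v x = 0 \<longrightarrow> x = 0)"
      unfolding invertible_left_inverse matrix_left_invertible_ker ..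
    also have "\<dots> \<longleftrightarrow> (\<exists>v. v \<noteq> 0 \<and> B *v v = c *s v)" unfolding ker by blast
    finally show ?thesis .
  qed
  have "p \<noteq> 0"
  proof
    assume "p = 0"
    define R where "R = (\<Sum>i\<in>UNIV. \<Sum>j\<in>UNIV. cmod (B$i$j))"
    have "det (Cm (of_real (R+1))) = 0" using pe[of "of_real (R+1)"] \<open>p = 0\<close> by simp
    then obtain v where "v \<noteq> 0" "B *v v = of_real (R+1) *s v" using det0 by blast
    from eig_bound[OF this] have "cmod (of_real (R+1)) \<le> R" unfolding R_def .
    moreover have "R \<ge> 0" unfolding R_def by (intro sum_nonneg) auto
    ultimately show False by simp
  qed
  hence "finite {c. poly p c = 0}" by (rule poly_roots_finite)
  moreover have "{c. \<exists>v. v \<noteq> 0 \<and> B *v v = c *s v} \<subseteq> {c. poly p c = 0}"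
    using det0 pe by auto
  ultimately show ?thesis by (rule finite_subset[rotated])
qed

lemma spec_rad_ge:
  fixes A :: "real^'m^'m" and w :: "real^'m"
  assumes "w \<noteq> 0" "A *v w = l *s w"
  shows "\<bar>l\<bar> \<le> spec_rad A"
proof -
  define B where "B = (\<chi> i j. complex_of_real (A $ i $ j))"
  define v where "v = (\<chi> i. complex_of_real (w $ i))"
  have "v \<noteq> 0" using assms(1) unfolding v_def by (auto simp: vec_eq_iff)
  have "B *v v = (\<chi> i. complex_of_real l * v $ i)"
  proof -
    have h: "(\<Sum>j\<in>UNIV. A $ i $ j * w $ j) = l * w $ i" for i
      using arg_cong[OF assms(2), of "\<lambda>x. x $ i"] by (simp add: matrix_vector_mult_def)
    have "(\<Sum>j\<in>UNIV. complex_of_real (A $ i $ j) * complex_of_real (w $ j)) = complex_of_real l * complex_of_real (w $ i)" for i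
    proof -
      have "(\<Sum>j\<in>UNIV. complex_of_real (A $ i $ j) * complex_of_real (w $ j))
          = complex_of_real (\<Sum>j\<in>UNIV. A $ i $ j * w $ j)" by simp
      also have "\<dots> = complex_of_real l * complex_of_real (w $ i)" using h[of i] by simp
      finally show ?thesis .
    qed
    thus ?thesis by (simp add: B_def v_def matrix_vector_mult_def vec_eq_iff)
  qed
  hence mem: "cmod (complex_of_real l) \<in> {cmod c | c. \<exists>v :: complex ^ 'm. v \<noteq> 0 \<and>
                       (\<chi> i j. complex_of_real (A $ i $ j)) *v v = (\<chi> i. c * v $ i)}"
    using \<open>v \<noteq> 0\<close> unfolding B_def by blast
  have eq: "{cmod c | c. \<exists>v :: complex ^ 'm. v \<noteq> 0 \<and>
                       (\<chi> i j. complex_of_real (A $ i $ j)) *v v = (\<chi> i. c * v $ i)}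
     = cmod ` {c. \<exists>v. v \<noteq> 0 \<and> B *v v = c *s v}"
    unfolding B_def by (auto simp: vec_eq_iff)
  have fin: "finite {cmod c | c. \<exists>v :: complex ^ 'm. v \<noteq> 0 \<and>
                       (\<chi> i j. complex_of_real (A $ i $ j)) *v v = (\<chi> i. c * v $ i)}"
    unfolding eq by (intro finite_imageI eig_finite)
  show ?thesis unfolding spec_rad_def using Max_ge[OF fin mem] by simp
qed

lemma sum_if_swap:
  fixes h :: "'a::finite \<Rightarrow> real"
  assumes "finite A"
  shows "(\<Sum>\<Theta>\<in>UNIV. (\<Sum>i\<in>A. if \<Theta> = f i then g i else 0) * h \<Theta>) = (\<Sum>i\<in>A. g i * h (f i))"
proof -
  have "(\<Sum>\<Theta>\<in>UNIV. (\<Sum>i\<in>A. if \<Theta> = f i then g i else 0) * h \<Theta>)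
      = (\<Sum>\<Theta>\<in>UNIV. \<Sum>i\<in>A. if \<Theta> = f i then g i * h \<Theta> else 0)"
    by (simp add: sum_distrib_right if_distrib[of "\<lambda>x. x * _"] cong: if_cong)
  also have "\<dots> = (\<Sum>i\<in>A. \<Sum>\<Theta>\<in>UNIV. if \<Theta> = f i then g i * h \<Theta> else 0)"
    by (rule sum.swap)
  also have "\<dots> = (\<Sum>i\<in>A. g i * h (f i))" by simp
  finally show ?thesis .
qed

lemma D_inv:
  assumes "\<forall>j. s_coef r b j \<noteq> 0"
  shows "matrix_inv (D_mat r b :: real^('n::finite set)^('n set)) ** D_mat r b = mat 1"
proof -
  let ?D = "D_mat r b :: real^('n set)^('n set)"
  define Di :: "real^('n set)^('n set)" where
    "Di = (\<chi> \<Omega> \<Theta>. if \<Omega> = \<Theta> then 1 / (\<Prod>j\<in>\<Omega>. s_coef r b j) else 0)"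
  have nz: "(\<Prod>j\<in>\<Omega>. s_coef r b j) \<noteq> 0" for \<Omega> :: "'n set"
    using assms by (simp add: prod_zero_iff)
  have "?D ** Di = mat 1" "Di ** ?D = mat 1"
    using nz by (auto simp: D_mat_def Di_def matrix_matrix_mult_def mat_def vec_eq_iff
        if_distrib[of "\<lambda>x. x * _"] cong: if_cong)
  hence "invertible ?D" unfolding invertible_def by blast
  hence "\<exists>A'. ?D ** A' = mat 1 \<and> A' ** ?D = mat 1" unfolding invertible_def .
  from someI_ex[OF this] show ?thesis unfolding matrix_inv_def by blast
qed

lemma Mt_eig:
  fixes p :: "'n::finite \<Rightarrow> real" and l :: real
  assumes sig: "\<forall>i. sigma_coef q r b i = (2 * l - p i) * p i"
    and lam: "l = (\<Sum>j\<in>UNIV. p j) - a"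
  shows "M_tilde a q r b *v (\<chi> \<Omega>. \<Prod>j\<in>\<Omega>. p j) = l *s (\<chi> \<Omega>. \<Prod>j\<in>\<Omega>. p j)"
proof -
  define vf where "vf \<Omega> = (\<Prod>j\<in>\<Omega>. p j)" for \<Omega> :: "'n set"
  have "(\<Sum>\<Theta>\<in>UNIV. M_tilde a q r b $ \<Omega> $ \<Theta> * vf \<Theta>) = l * vf \<Omega>" for \<Omega>
  proof (cases "\<Omega> = {}")
    case True
    have "(\<Sum>\<Theta>\<in>UNIV. M_tilde a q r b $ \<Omega> $ \<Theta> * vf \<Theta>)
        = (\<Sum>\<Theta>\<in>UNIV. (\<Sum>j\<in>UNIV. if \<Theta> = {j} then 1 else 0) * vf \<Theta>)
          + (\<Sum>\<Theta>\<in>UNIV. (if \<Theta> = {} then - a else 0) * vf \<Theta>)"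
      using True by (simp add: M_tilde_def distrib_right sum.distrib)
    also have "\<dots> = (\<Sum>j\<in>UNIV. p j) - a"
      by (subst sum_if_swap) (simp_all add: vf_def if_distrib[of "\<lambda>x. x * _"] cong: if_cong)
    finally show ?thesis using True lam by (simp add: vf_def)
  next
    case False
    define n where "n = card \<Omega>"
    have "n \<ge> 1" using False unfolding n_def by (simp add: Suc_leI card_gt_0_iff)
    hence npos: "2 * real n - 1 > 0" by simp
    have "(\<Sum>\<Theta>\<in>UNIV. M_tilde a q r b $ \<Omega> $ \<Theta> * vf \<Theta>)
        = ((\<Sum>\<Theta>\<in>UNIV. (\<Sum>i\<in>\<Omega>. if \<Theta> = \<Omega> - {i} then sigma_coef q r b i else 0) * vf \<Theta>)
          + (\<Sum>\<Theta>\<in>UNIV. (\<Sum>i\<in>UNIV - \<Omega>. if \<Theta> = insert i \<Omega> then -1 else 0) * vf \<Theta>)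
          + (\<Sum>\<Theta>\<in>UNIV. (if \<Theta> = \<Omega> then a else 0) * vf \<Theta>)) / (2 * real n - 1)"
      using False by (simp add: M_tilde_def n_def distrib_right sum.distrib sum_divide_distrib[symmetric])
    also have "\<dots> = ((\<Sum>i\<in>\<Omega>. sigma_coef q r b i * vf (\<Omega> - {i}))
          + (\<Sum>i\<in>UNIV - \<Omega>. - vf (insert i \<Omega>)) + a * vf \<Omega>) / (2 * real n - 1)"
      by (subst sum_if_swap, simp, subst sum_if_swap, simp)
         (simp add: if_distrib[of "\<lambda>x. x * _"] cong: if_cong)
    also have "(\<Sum>i\<in>\<Omega>. sigma_coef q r b i * vf (\<Omega> - {i})) = (\<Sum>i\<in>\<Omega>. (2 * l - p i) * vf \<Omega>)"
    proof (rule sum.cong[OF refl])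
      fix i assume "i \<in> \<Omega>"
      hence "vf \<Omega> = p i * vf (\<Omega> - {i})" unfolding vf_def by (simp add: prod.remove)
      thus "sigma_coef q r b i * vf (\<Omega> - {i}) = (2 * l - p i) * vf \<Omega>" using sig by simp
    qed
    also have "(\<Sum>i\<in>UNIV - \<Omega>. - vf (insert i \<Omega>)) = (\<Sum>i\<in>UNIV - \<Omega>. - p i * vf \<Omega>)"
      by (rule sum.cong[OF refl]) (simp add: vf_def)
    also have "(\<Sum>i\<in>\<Omega>. (2 * l - p i) * vf \<Omega>) + (\<Sum>i\<in>UNIV - \<Omega>. - p i * vf \<Omega>) + a * vf \<Omega>
        = vf \<Omega> * (2 * real n * l - ((\<Sum>i\<in>\<Omega>. p i) + (\<Sum>i\<in>UNIV - \<Omega>. p i)) + a)"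
      by (simp add: sum_distrib_right[symmetric] sum_subtractf n_def algebra_simps sum_negf)
    also have "(\<Sum>i\<in>\<Omega>. p i) + (\<Sum>i\<in>UNIV - \<Omega>. p i) = (\<Sum>i\<in>UNIV. p i)"
      using sum.subset_diff[of \<Omega> UNIV p] by simp
    finally have C: "(\<Sum>\<Theta>\<in>UNIV. M_tilde a q r b $ \<Omega> $ \<Theta> * vf \<Theta>)
        = vf \<Omega> * (2 * real n * l - (\<Sum>i\<in>UNIV. p i) + a) / (2 * real n - 1)" .
    have "2 * real n * l - (\<Sum>i\<in>UNIV. p i) + a = (2 * real n - 1) * l" using lam by (simp add: algebra_simps)
    with C npos show ?thesis by simp
  qed
  thus ?thesis by (simp add: vf_def vec_eq_iff matrix_vector_mult_def)
qed

lemma fne_bound: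
  fixes a :: real and q r b k :: "'n::finite \<Rightarrow> real"
  assumes q_pos: "\<forall>i. q i > 0" and r_pos: "\<forall>i. r i > 0" and b_nz: "\<forall>i. b i \<noteq> 0"
    and fne: "is_FNE a q r b k"
  shows "\<forall>i. k i > 0" "(\<Sum>j\<in>UNIV. s_coef r b j * k j) - a \<le> spec_rad (M_mat a q r b)"
proof -
  let ?s = "s_coef r b"
  define P where "P = (\<Sum>j\<in>UNIV. ?s j * k j)"
  define l where "l = P - a"
  have eq: "2 * (a - P) * k i + q i + ?s i * (k i)^2 = 0" for i
    using fne unfolding is_FNE_def P_def by blast
  have lpos: "l > 0" using fne unfolding is_FNE_def P_def l_def by simp
  have spos: "?s i > 0" for i using r_pos b_nz by (simp add: s_coef_def)
  show kpos: "\<forall>i. k i > 0"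
  proof
    fix i
    have "q i + ?s i * (k i)^2 > 0" using q_pos spos[of i] by (simp add: add_pos_nonneg)
    hence "(a - P) * k i < 0" using eq[of i] by linarith
    thus "k i > 0" using lpos unfolding l_def by (simp add: mult_less_0_iff)
  qed
  define p where "p i = ?s i * k i" for i
  have sig: "\<forall>i. sigma_coef q r b i = (2 * l - p i) * p i"
  proof
    fix i
    have "?s i * (2 * (a - P) * k i + q i + ?s i * (k i)^2) = 0" using eq[of i] by simp
    thus "sigma_coef q r b i = (2 * l - p i) * p i"
      unfolding sigma_coef_def p_def l_def by (simp add: algebra_simps power2_eq_square)
  qed
  have lam: "l = (\<Sum>j\<in>UNIV. p j) - a" unfolding l_def P_def p_def ..
  define w :: "real^('n set)" where "w = (\<chi> \<Omega>. \<Prod>j\<in>\<Omega>. k j)"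
  have Dw: "D_mat r b *v w = (\<chi> \<Omega>. \<Prod>j\<in>\<Omega>. p j)"
    by (simp add: D_mat_def w_def matrix_vector_mult_def vec_eq_iff if_distrib[of "\<lambda>x. x * _"]
        p_def prod.distrib cong: if_cong)
  have "M_mat a q r b *v w = matrix_inv (D_mat r b) *v (M_tilde a q r b *v (D_mat r b *v w))"
    unfolding M_mat_def by (simp add: matrix_vector_mul_assoc matrix_mul_assoc)
  also have "\<dots> = matrix_inv (D_mat r b) *v (l *s (D_mat r b *v w))"
    unfolding Dw using Mt_eig[OF sig lam] by simp
  also have "\<dots> = l *s ((matrix_inv (D_mat r b) ** D_mat r b) *v w)"
    by (simp add: matrix_vector_mul_assoc vec.scale)
  also have "\<dots> = l *s w" using D_inv[of r b] spos by (simp add: less_imp_neq[symmetric])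
  finally have ev: "M_mat a q r b *v w = l *s w" .
  have "w \<noteq> 0"
  proof
    assume "w = 0"
    hence "w $ {} = 0" by simp
    thus False by (simp add: w_def)
  qed
  from spec_rad_ge[OF this ev] lpos show "P - a \<le> spec_rad (M_mat a q r b)"
    unfolding l_def by simp
qed

lemma part12:
  fixes a :: real and q r b \<mu> :: "'n::finite \<Rightarrow> real"
  assumes q_pos: "\<forall>i. q i > 0" and r_pos: "\<forall>i. r i > 0" and b_nz: "\<forall>i. b i \<noteq> 0"
    and mu_pos: "\<forall>i. \<mu> i > 0"
  shows "(\<forall>k. is_FNE a q r b k \<longrightarrow>
            (\<Sum>i\<in>UNIV. \<mu> i * k i)
              \<le> Max (range (\<lambda>i. \<mu> i / s_coef r b i)) * (spec_rad (M_mat a q r b) + a))"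
    "((\<exists>k. is_FNE a q r b k) \<longrightarrow>
            PoA_FB a q r b \<mu>
              \<le> Max (range (\<lambda>i. \<mu> i / s_coef r b i)) * (spec_rad (M_mat a q r b) + a)
                 / k_hat a q r b \<mu>)"
proof -
  let ?s = "s_coef r b"
  let ?Mx = "Max (range (\<lambda>i. \<mu> i / ?s i))"
  let ?B = "?Mx * (spec_rad (M_mat a q r b) + a)"
  have spos: "?s i > 0" for i using r_pos b_nz by (simp add: s_coef_def)
  have mxge: "\<mu> i / ?s i \<le> ?Mx" for i by (rule Max_ge) auto
  have mxpos: "?Mx \<ge> 0" using mxge[of undefined] mu_pos spos[of undefined]
    by (meson divide_nonneg_pos less_imp_le order_trans)
  show p1: "\<forall>k. is_FNE a q r b k \<longrightarrow> (\<Sum>i\<in>UNIV. \<mu> i * k i) \<le> ?B"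
  proof (intro allI impI)
    fix k assume fne: "is_FNE a q r b k"
    note fb = fne_bound[OF q_pos r_pos b_nz fne]
    have "(\<Sum>i\<in>UNIV. \<mu> i * k i) = (\<Sum>i\<in>UNIV. (\<mu> i / ?s i) * (?s i * k i))"
      using spos by (intro sum.cong refl) (simp add: less_imp_neq[symmetric])
    also have "\<dots> \<le> (\<Sum>i\<in>UNIV. ?Mx * (?s i * k i))"
      using fb(1) spos by (intro sum_mono mult_right_mono mxge) (auto intro: less_imp_le)
    also have "\<dots> = ?Mx * (\<Sum>i\<in>UNIV. ?s i * k i)" by (simp add: sum_distrib_left)
    also have "\<dots> \<le> ?B" using fb(2) mxpos by (intro mult_left_mono) auto
    finally show "(\<Sum>i\<in>UNIV. \<mu> i * k i) \<le> ?B" .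
  qed
  have khat: "k_hat a q r b \<mu> \<ge> 0"
  proof -
    define qb where "qb = (\<Sum>i\<in>UNIV. \<mu> i * q i)"
    define bb where "bb = (\<Sum>i\<in>UNIV. (b i)^2 / (\<mu> i * r i))"
    have "qb \<ge> 0" unfolding qb_def using mu_pos q_pos by (intro sum_nonneg mult_nonneg_nonneg) (auto intro: less_imp_le)
    moreover have "bb \<ge> 0" unfolding bb_def using mu_pos r_pos by (intro sum_nonneg divide_nonneg_pos mult_pos_pos) auto
    ultimately have "sqrt (a^2 + qb * bb) \<ge> sqrt (a^2)" by (intro real_sqrt_le_mono) simp
    hence "a + sqrt (a^2 + qb * bb) \<ge> 0" by simp
    with \<open>bb \<ge> 0\<close> show ?thesis unfolding k_hat_def Let_def qb_def[symmetric] bb_def[symmetric] by simp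
  qed
  show "(\<exists>k. is_FNE a q r b k) \<longrightarrow> PoA_FB a q r b \<mu> \<le> ?B / k_hat a q r b \<mu>"
  proof
    assume ex: "\<exists>k. is_FNE a q r b k"
    show "PoA_FB a q r b \<mu> \<le> ?B / k_hat a q r b \<mu>"
      unfolding PoA_FB_def
    proof (rule cSup_least)
      show "{(\<Sum>i\<in>UNIV. \<mu> i * k i) / k_hat a q r b \<mu> |k. is_FNE a q r b k} \<noteq> {}" using ex by blast
    next
      fix x assume "x \<in> {(\<Sum>i\<in>UNIV. \<mu> i * k i) / k_hat a q r b \<mu> |k. is_FNE a q r b k}"
      then obtain k where "is_FNE a q r b k" "x = (\<Sum>i\<in>UNIV. \<mu> i * k i) / k_hat a q r b \<mu>" by blast
      thus "x \<le> ?B / k_hat a q r b \<mu>" using p1 khat by (simp add: divide_right_mono)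
    qed
  qed
qed

theorem theorem5:
  fixes a :: real and q r b \<mu> :: "'n::finite \<Rightarrow> real"
  assumes q_pos: "\<forall>i. q i > 0"
    and r_pos: "\<forall>i. r i > 0"
    and b_nz: "\<forall>i. b i \<noteq> 0"
    and mu_pos: "\<forall>i. \<mu> i > 0"
    and mu_sum: "(\<Sum>i\<in>UNIV. \<mu> i) = 1"
  shows "(\<forall>k. is_FNE a q r b k \<longrightarrow>
            (\<Sum>i\<in>UNIV. \<mu> i * k i)
              \<le> Max (range (\<lambda>i. \<mu> i / s_coef r b i)) * (spec_rad (M_mat a q r b) + a))
       \<and> ((\<exists>k. is_FNE a q r b k) \<longrightarrow>
            PoA_FB a q r b \<mu>
              \<le> Max (range (\<lambda>i. \<mu> i / s_coef r b i)) * (spec_rad (M_mat a q r b) + a)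
                 / k_hat a q r b \<mu>)
       \<and> ((\<exists>k. is_FNE a q r b k) \<longrightarrow>
            PoA_FB a q r b (\<lambda>i. s_coef r b i / (\<Sum>j\<in>UNIV. s_coef r b j))
              \<le> (spec_rad (M_mat a q r b) + a)
                 / ((\<Sum>j\<in>UNIV. s_coef r b j) * k_hat a q r b (\<lambda>i. s_coef r b i / (\<Sum>j\<in>UNIV. s_coef r b j))))"
proof (intro conjI)
  show "\<forall>k. is_FNE a q r b k \<longrightarrow>
            (\<Sum>i\<in>UNIV. \<mu> i * k i)
              \<le> Max (range (\<lambda>i. \<mu> i / s_coef r b i)) * (spec_rad (M_mat a q r b) + a)"
    by (rule part12(1)[OF q_pos r_pos b_nz mu_pos])
  show "(\<exists>k. is_FNE a q r b k) \<longrightarrow>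
            PoA_FB a q r b \<mu>
              \<le> Max (range (\<lambda>i. \<mu> i / s_coef r b i)) * (spec_rad (M_mat a q r b) + a)
                 / k_hat a q r b \<mu>"
    by (rule part12(2)[OF q_pos r_pos b_nz mu_pos])
  let ?s = "s_coef r b"
  define S where "S = (\<Sum>j\<in>UNIV. ?s j)"
  have spos: "?s i > 0" for i using r_pos b_nz by (simp add: s_coef_def)
  have Spos: "S > 0" unfolding S_def by (rule sum_pos) (auto intro: spos)
  have mb: "\<forall>i. (\<lambda>i. ?s i / S) i > 0" using spos Spos by (simp add: divide_pos_pos)
  have fe: "(\<lambda>i. ?s i / S / ?s i) = (\<lambda>i. 1 / S)"
  proof
    fix i show "?s i / S / ?s i = 1 / S" using spos[of i] Spos by (simp add: divide_simps)
  qed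
  have rng: "range (\<lambda>i. ?s i / S / ?s i) = {1 / S}" unfolding fe by simp
  have key: "(\<exists>k. is_FNE a q r b k) \<longrightarrow> PoA_FB a q r b (\<lambda>i. ?s i / S)
     \<le> Max {1 / S} * (spec_rad (M_mat a q r b) + a) / k_hat a q r b (\<lambda>i. ?s i / S)"
    using part12(2)[OF q_pos r_pos b_nz mb] unfolding rng .
  have eq: "Max {1 / S} * X / Y = X / (S * Y)" for X Y :: real
    by simp
  show "(\<exists>k. is_FNE a q r b k) \<longrightarrow>
            PoA_FB a q r b (\<lambda>i. s_coef r b i / (\<Sum>j\<in>UNIV. s_coef r b j))
              \<le> (spec_rad (M_mat a q r b) + a)
                 / ((\<Sum>j\<in>UNIV. s_coef r b j) * k_hat a q r b (\<lambda>i. s_coef r b i / (\<Sum>j\<in>UNIV. s_coef r b j)))"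
    using key[unfolded eq] unfolding S_def .
qed

end
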